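(* There is a constant $c$ such that for every $n\in\mathbb{N}_{\geq 1}$ there exists a language $L_n\subseteq\{a,b\}^*$ with $L_n\in\mathsf{DD}_0$ such that $L_n$ is recognized by an NFA with at most $c\,n^2$ states, but every poNFA recognizing $L_n$ has more than $2^{n-1}$ states.
   Context: $\mathsf{DD}_0$ (level $0$ of the dot-depth hierarchy) is the class of finite and cofinite languages. NFAs have a single initial state and no $\varepsilon$-transitions. For an NFA with transition function $\delta$, write $p\leq q$ if $q\in\delta(p,w)$ for some word $w$; the NFA is a poNFA (partially ordered NFA) if $\leq$ is a partial order on its states. The size of an automaton is its number of states. *)

theory Defs
  imports Complex_Main
begin

datatype ab = a | b

text \<open>NFAs with a single initial state and no epsilon-transitions.
  States are drawn from nat (any finite automaton can be renamed to one with
  nat states without changing its size or language).\<close>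
record nfa =
  states :: "nat set"
  init   :: nat
  delta  :: "nat \<Rightarrow> ab \<Rightarrow> nat set"
  final  :: "nat set"

definition wf_nfa :: "nfa \<Rightarrow> bool" where
  "wf_nfa A \<longleftrightarrow> finite (states A) \<and> init A \<in> states A \<and> final A \<subseteq> states A
     \<and> (\<forall>q\<in>states A. \<forall>x. delta A q x \<subseteq> states A)"

fun delta_star :: "nfa \<Rightarrow> nat \<Rightarrow> ab list \<Rightarrow> nat set" where
  "delta_star A q [] = {q}"
| "delta_star A q (x # w) = (\<Union>p\<in>delta A q x. delta_star A p w)"

definition lang :: "nfa \<Rightarrow> ab list set" where
  "lang A = {w. delta_star A (init A) w \<inter> final A \<noteq> {}}"

definition size_nfa :: "nfa \<Rightarrow> nat" where
  "size_nfa A = card (states A)"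

definition reach :: "nfa \<Rightarrow> nat \<Rightarrow> nat \<Rightarrow> bool" where
  "reach A p q \<longleftrightarrow> (\<exists>w. q \<in> delta_star A p w)"

text \<open>poNFA: reach is a partial order on the states (reflexivity and transitivity
  hold automatically; we state all three properties as in the definition).\<close>
definition is_poNFA :: "nfa \<Rightarrow> bool" where
  "is_poNFA A \<longleftrightarrow> wf_nfa A \<and>
     (\<forall>p\<in>states A. reach A p p) \<and>
     (\<forall>p\<in>states A. \<forall>q\<in>states A. \<forall>r\<in>states A. reach A p q \<and> reach A q r \<longrightarrow> reach A p r) \<and>
     (\<forall>p\<in>states A. \<forall>q\<in>states A. reach A p q \<and> reach A q p \<longrightarrow> p = q)"

definition DD0 :: "ab list set \<Rightarrow> bool" where
  "DD0 L \<longleftrightarrow> finite L \<or> finite (- L)"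

end

theory Submission
  imports Defs "HOL-Library.Countable"
begin

datatype st = Sc nat bool bool nat | Wt nat bool | Ac

instance st :: countable by countable_datatype

lemma ab_UNIV: "(UNIV :: ab set) = {a, b}"
  by (auto intro: ab.exhaust)

lemma ab_cases2: "x \<noteq> a \<longleftrightarrow> x = b"
  by (cases x) auto

definition stepS :: "nat \<Rightarrow> st \<Rightarrow> ab \<Rightarrow> st" where
  "stepS N s x = (case s of Sc r f z c \<Rightarrow>
      Sc (Suc r mod (3*N))
         (if r mod 3 = 0 then (r = 0 \<or> f) \<and> x = b else f)
         (z \<and> Suc r < 3*N)
         (if r = 0 \<and> f then min 2 (Suc c) else c)
    | _ \<Rightarrow> s)"

definition delta_st :: "nat \<Rightarrow> st \<Rightarrow> ab \<Rightarrow> st set" where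
  "delta_st N s x = (case s of
      Sc r f z c \<Rightarrow> {stepS N s x}
        \<union> (if r mod 3 = 0 then {Wt (3*N - 1) ((x = b) \<noteq> (r = 0 \<or> f))} else {})
        \<union> (if (r mod 3 = 1 \<and> x \<noteq> a) \<or> (r mod 3 = 2 \<and> x \<noteq> b) \<or> (r mod 3 = 0 \<and> z \<and> x = b)
            then {Ac} else {})
    | Wt d e \<Rightarrow> (if d = 0 then (if (x = b) \<noteq> e then {Ac} else {}) else {Wt (d - 1) e})
    | Ac \<Rightarrow> {Ac})"

fun dst :: "nat \<Rightarrow> st \<Rightarrow> ab list \<Rightarrow> st set" where
  "dst N s [] = {s}"
| "dst N s (x # xs) = (\<Union>p\<in>delta_st N s x. dst N p xs)"

lemma dst_append: "dst N s (xs @ ys) = (\<Union>p\<in>dst N s xs. dst N p ys)"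
  by (induction xs arbitrary: s) auto

lemma dst_snoc: "dst N s (xs @ [x]) = (\<Union>p\<in>dst N s xs. delta_st N p x)"
  by (simp add: dst_append)

definition Sc0 :: st where "Sc0 = Sc 0 False True 0"

definition scan :: "nat \<Rightarrow> ab list \<Rightarrow> st" where
  "scan N v = foldl (stepS N) Sc0 v"

lemma scan_snoc: "scan N (v @ [x]) = stepS N (scan N v) x"
  by (simp add: scan_def)

definition okst :: "nat \<Rightarrow> st \<Rightarrow> bool" where
  "okst N s = (case s of Sc r f z c \<Rightarrow> r < 3*N \<and> c < 3 | Wt d e \<Rightarrow> d < 3*N | Ac \<Rightarrow> True)"

definition QS :: "nat \<Rightarrow> st set" where
  "QS N = {s. okst N s}"

definition FS :: "nat \<Rightarrow> st set" where
  "FS N = {s. okst N s \<and> (case s of Sc r f z c \<Rightarrow> c \<noteq> 1 | Wt d e \<Rightarrow> False | Ac \<Rightarrow> True)}"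

definition Anfa :: "nat \<Rightarrow> nfa" where
  "Anfa N = \<lparr> states = to_nat ` QS N, init = to_nat Sc0,
     delta = (\<lambda>q x. to_nat ` delta_st N (from_nat q) x), final = to_nat ` FS N \<rparr>"

lemma QS_sub: "QS N \<subseteq> (\<lambda>(r,f,z,c). Sc r f z c) ` ({..<3*N} \<times> UNIV \<times> UNIV \<times> {..<3})
        \<union> (\<lambda>(d,e). Wt d e) ` ({..<3*N} \<times> UNIV) \<union> {Ac}"
proof
  fix s assume "s \<in> QS N"
  then show "s \<in> (\<lambda>(r,f,z,c). Sc r f z c) ` ({..<3*N} \<times> UNIV \<times> UNIV \<times> {..<3})
        \<union> (\<lambda>(d,e). Wt d e) ` ({..<3*N} \<times> UNIV) \<union> {Ac}"
  proof (cases s)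
    case (Sc r f z c)
    with \<open>s \<in> QS N\<close> have "(r,f,z,c) \<in> {..<3*N} \<times> UNIV \<times> UNIV \<times> {..<3}"
      by (auto simp: QS_def okst_def)
    then show ?thesis unfolding Sc by (intro UnI1) (rule image_eqI[where x="(r,f,z,c)"], auto)
  next
    case (Wt d e)
    with \<open>s \<in> QS N\<close> have "(d,e) \<in> {..<3*N} \<times> UNIV"
      by (auto simp: QS_def okst_def)
    then show ?thesis unfolding Wt by (intro UnI1 UnI2) (rule image_eqI[where x="(d,e)"], auto)
  qed auto
qed

lemma card_QS: "card (QS N) \<le> 42 * N + 1"
proof -
  have fin: "finite ((\<lambda>(r,f,z,c). Sc r f z c) ` ({..<3*N} \<times> (UNIV::bool set) \<times> (UNIV::bool set) \<times> {..<3::nat})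
        \<union> (\<lambda>(d,e). Wt d e) ` ({..<3*N} \<times> (UNIV::bool set)) \<union> {Ac})" by auto
  have "card (QS N) \<le> card ((\<lambda>(r,f,z,c). Sc r f z c) ` ({..<3*N} \<times> (UNIV::bool set) \<times> (UNIV::bool set) \<times> {..<3::nat})
        \<union> (\<lambda>(d,e). Wt d e) ` ({..<3*N} \<times> (UNIV::bool set)) \<union> {Ac})"
    by (rule card_mono[OF fin QS_sub])
  also have "\<dots> \<le> card ((\<lambda>(r,f,z,c). Sc r f z c) ` ({..<3*N} \<times> (UNIV::bool set) \<times> (UNIV::bool set) \<times> {..<3::nat}))
        + card ((\<lambda>(d,e). Wt d e) ` ({..<3*N} \<times> (UNIV::bool set))) + card {Ac}"
    by (meson card_Un_le add_le_mono order_trans le_refl)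
  also have "\<dots> \<le> card ({..<3*N} \<times> (UNIV::bool set) \<times> (UNIV::bool set) \<times> {..<3::nat})
        + card ({..<3*N} \<times> (UNIV::bool set)) + 1"
    by (intro add_le_mono card_image_le) auto
  also have "\<dots> = 42 * N + 1" by (simp add: card_cartesian_product)
  finally show ?thesis .
qed

lemma finite_QS: "finite (QS N)"
  using QS_sub by (rule finite_subset) auto

lemma delta_QS: "s \<in> QS N \<Longrightarrow> N \<ge> 1 \<Longrightarrow> delta_st N s x \<subseteq> QS N"
  unfolding QS_def delta_st_def stepS_def okst_def by (auto split: st.splits)

lemma FS_QS: "FS N \<subseteq> QS N"
  unfolding QS_def FS_def by auto

lemma wf_Anfa: "N \<ge> 1 \<Longrightarrow> wf_nfa (Anfa N)"
proof -
  assume N: "N \<ge> 1"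
  have "to_nat ` delta_st N (from_nat q) x \<subseteq> to_nat ` QS N" if "q \<in> to_nat ` QS N" for q x
  proof -
    from that obtain s where "s \<in> QS N" "q = to_nat s" by auto
    then show ?thesis using delta_QS[OF _ N] by (intro image_mono) auto
  qed
  moreover have "Sc0 \<in> QS N" using N by (simp add: Sc0_def QS_def okst_def)
  moreover have "to_nat ` FS N \<subseteq> to_nat ` QS N" using FS_QS by (rule image_mono)
  ultimately show ?thesis
    unfolding wf_nfa_def Anfa_def using finite_QS by auto
qed

lemma size_Anfa: "size_nfa (Anfa N) \<le> 42 * N + 1"
  unfolding size_nfa_def Anfa_def using card_QS
  by (simp add: card_image inj_on_def)

lemma dstar_Anfa: "delta_star (Anfa N) (to_nat s) v = to_nat ` dst N s v"
  by (induction v arbitrary: s) (auto simp: Anfa_def)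

lemma lang_Anfa: "lang (Anfa N) = {v. dst N Sc0 v \<inter> FS N \<noteq> {}}"
proof -
  have i: "init (Anfa N) = to_nat Sc0" "final (Anfa N) = to_nat ` FS N" by (simp_all add: Anfa_def)
  have "delta_star (Anfa N) (init (Anfa N)) v \<inter> final (Anfa N) = to_nat ` (dst N Sc0 v \<inter> FS N)" for v
    unfolding i dstar_Anfa by (simp add: image_Int inj_on_def)
  then show ?thesis unfolding lang_def by auto
qed


definition Fv :: "nat \<Rightarrow> ab list \<Rightarrow> bool" where
  "Fv N v = (let L = length v; r = L mod (3*N) in
     if L = 0 then False
     else if r = 0 then (\<forall>j. 3*j < 3*N \<longrightarrow> v!(L - 3*N + 3*j) = b)
     else (\<forall>j. 3*j < r \<longrightarrow> v!(L - r + 3*j) = b))"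

lemma mod3_B: "(L mod (3*N)) mod 3 = L mod (3::nat)"
  by (simp add: mod_mod_cancel)

lemma all_less_Suc_split: "(\<forall>j. (g j::nat) < r + 1 \<longrightarrow> P j) \<longleftrightarrow> (\<forall>j. (g j < r \<longrightarrow> P j) \<and> (g j = r \<longrightarrow> P j))"
  by (auto simp: less_Suc_eq)

lemma scan_inv:
  assumes N: "N \<ge> 1"
  shows "\<exists>c. scan N v = Sc (length v mod (3*N)) (Fv N v) (length v < 3*N) c \<and> c < 3"
proof (induction v rule: rev_induct)
  case Nil
  then show ?case using N by (simp add: scan_def Sc0_def Fv_def)
next
  case (snoc x v)
  then obtain c where c: "scan N v = Sc (length v mod (3*N)) (Fv N v) (length v < 3*N) c" "c < 3"
    by auto
  define L where "L = length v"
  define B where "B = 3*N"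
  define r where "r = L mod B"
  have B3: "B \<ge> 3" using N by (simp add: B_def)
  have rB: "r < B" using B3 by (simp add: r_def)
  have rm: "r mod 3 = L mod 3" by (simp add: r_def B_def mod3_B)
  have Lr: "L = (L div B) * B + r" by (simp add: r_def)
  have rle: "r \<le> L" by (simp add: r_def)
  have Bm: "B mod 3 = 0" by (simp add: B_def)
  have F': "(if r mod 3 = 0 then (r = 0 \<or> Fv N v) \<and> x = b else Fv N v) = Fv N (v @ [x])"
  proof (cases "r mod 3 = 0")
    case True
    have r1: "r + 1 < B"
    proof (rule ccontr)
      assume "\<not> r + 1 < B"
      then have "B = r + 1" using rB by simp
      then show False using True Bm by presburger
    qed
    have Lm: "(L + 1) mod B = r + 1"
    proof -
      have "(L + 1) mod B = (r + 1) mod B" by (simp add: r_def mod_Suc_eq)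
      then show ?thesis using r1 by simp
    qed
    have "Fv N (v @ [x]) = (\<forall>j. 3*j < r + 1 \<longrightarrow> (v@[x])!(L - r + 3*j) = b)"
      using Lm by (simp add: Fv_def L_def[symmetric] B_def[symmetric] Let_def)
    also have "\<dots> = ((\<forall>j. 3*j < r \<longrightarrow> v!(L - r + 3*j) = b) \<and> x = b)"
    proof -
      have "(\<forall>j. 3*j < r + 1 \<longrightarrow> (v@[x])!(L - r + 3*j) = b) \<longleftrightarrow>
            (\<forall>j. (3*j < r \<longrightarrow> (v@[x])!(L - r + 3*j) = b) \<and> (3*j = r \<longrightarrow> (v@[x])!(L - r + 3*j) = b))"
        by (rule all_less_Suc_split)
      also have "\<dots> \<longleftrightarrow> (\<forall>j. (3*j < r \<longrightarrow> v!(L - r + 3*j) = b) \<and> (3*j = r \<longrightarrow> x = b))"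
      proof -
        have "(3*j < r \<longrightarrow> (v@[x])!(L - r + 3*j) = b) \<longleftrightarrow> (3*j < r \<longrightarrow> v!(L - r + 3*j) = b)" for j
          using rle by (auto simp: nth_append L_def)
        moreover have "(3*j = r \<longrightarrow> (v@[x])!(L - r + 3*j) = b) \<longleftrightarrow> (3*j = r \<longrightarrow> x = b)" for j
          using rle by (auto simp: nth_append L_def)
        ultimately show ?thesis by simp
      qed
      also have "\<dots> \<longleftrightarrow> (\<forall>j. 3*j < r \<longrightarrow> v!(L - r + 3*j) = b) \<and> x = b"
        using True by (auto simp: dvd_def dest!: mod_0_imp_dvd)
      finally show ?thesis .
    qed
    also have "\<dots> = ((r = 0 \<or> Fv N v) \<and> x = b)"
      using rle by (cases "r = 0") (auto simp: Fv_def L_def[symmetric] B_def[symmetric] r_def[symmetric] Let_def)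
    finally show ?thesis using True by simp
  next
    case False
    then have r0: "r \<noteq> 0" by auto
    then have L0: "L \<noteq> 0" using rle by auto
    have Fvv: "Fv N v = (\<forall>j. 3*j < r \<longrightarrow> v!(L - r + 3*j) = b)"
      using r0 L0 by (simp add: Fv_def L_def[symmetric] B_def[symmetric] r_def[symmetric] Let_def)
    have ne: "3*j \<noteq> r" for j using False by auto
    show ?thesis
    proof (cases "r + 1 < B")
      case True
      have Lm: "(L + 1) mod B = r + 1"
      proof -
        have "(L + 1) mod B = (r + 1) mod B" by (simp add: r_def mod_Suc_eq)
        then show ?thesis using True by simp
      qed
      have "Fv N (v @ [x]) = (\<forall>j. 3*j < r + 1 \<longrightarrow> (v@[x])!(L - r + 3*j) = b)"
        using Lm by (simp add: Fv_def L_def[symmetric] B_def[symmetric] Let_def)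
      also have "\<dots> = (\<forall>j. 3*j < r \<longrightarrow> v!(L - r + 3*j) = b)"
      proof -
        have "(3*j < r + 1 \<longrightarrow> (v@[x])!(L - r + 3*j) = b) \<longleftrightarrow> (3*j < r \<longrightarrow> v!(L - r + 3*j) = b)" for j
          using rle ne[of j] by (auto simp: nth_append L_def)
        then show ?thesis by simp
      qed
      finally show ?thesis using False Fvv by simp
    next
      case False2: False
      then have rB1: "r + 1 = B" using rB by simp
      have Lm: "(L + 1) mod B = 0"
        using rB1 Lr by (metis add.assoc mod_mult_self1 mod_self add.commute)
      have "Fv N (v @ [x]) = (\<forall>j. 3*j < B \<longrightarrow> (v@[x])!(L + 1 - B + 3*j) = b)"
        using Lm by (simp add: Fv_def L_def[symmetric] B_def[symmetric] Let_def)
      also have "\<dots> = (\<forall>j. 3*j < r \<longrightarrow> v!(L - r + 3*j) = b)"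
      proof -
        have "(3*j < B \<longrightarrow> (v@[x])!(L + 1 - B + 3*j) = b) \<longleftrightarrow> (3*j < r \<longrightarrow> v!(L - r + 3*j) = b)" for j
          using rle ne[of j] rB1 by (auto simp: nth_append L_def)
        then show ?thesis by simp
      qed
      finally show ?thesis using False Fvv by simp
    qed
  qed
  have z': "(L < B \<and> Suc r < B) = (L + 1 < B)"
    using rle by (auto simp: r_def)
  have r': "Suc r mod B = (L + 1) mod B"
    by (simp add: r_def mod_Suc_eq)
  show ?case
    using c F' z' r' unfolding scan_snoc
    by (auto simp: stepS_def L_def[symmetric] B_def[symmetric] r_def[symmetric])
qed


definition carryv :: "nat \<Rightarrow> ab list \<Rightarrow> nat \<Rightarrow> bool" where
  "carryv N v p = (\<forall>j. 3*j < p mod (3*N) \<longrightarrow> v!(p - p mod (3*N) + 3*j) = b)"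

definition ev :: "nat \<Rightarrow> ab list \<Rightarrow> nat \<Rightarrow> bool" where
  "ev N v p = ((v!p = b) \<noteq> carryv N v p)"

definition imm :: "nat \<Rightarrow> nat \<Rightarrow> ab \<Rightarrow> bool" where
  "imm N q x = ((q mod 3 = 1 \<and> x \<noteq> a) \<or> (q mod 3 = 2 \<and> x \<noteq> b) \<or> (q mod 3 = 0 \<and> q < 3*N \<and> x = b))"

definition err :: "nat \<Rightarrow> ab list \<Rightarrow> bool" where
  "err N v = (\<exists>q < length v. imm N q (v!q) \<or>
      (q mod 3 = 0 \<and> q + 3*N < length v \<and> ((v!(q+3*N) = b) \<noteq> ev N v q)))"

definition Wset :: "nat \<Rightarrow> ab list \<Rightarrow> st set" where
  "Wset N v = {Wt (p + 3*N - length v) (ev N v p) | p. p < length v \<and> p mod 3 = 0 \<and> length v \<le> p + 3*N}"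

lemma carryv_snoc: "p \<le> length v \<Longrightarrow> carryv N (v @ [x]) p = carryv N v p"
proof -
  assume p: "p \<le> length v"
  have eq: "(v @ [x])!(p - p mod (3*N) + 3*j) = v!(p - p mod (3*N) + 3*j)" if "3*j < p mod (3*N)" for j
  proof -
    have "p mod (3*N) \<le> p" by simp
    then have "p - p mod (3*N) + 3*j < length v" using that p by linarith
    then show ?thesis by (simp add: nth_append)
  qed
  show ?thesis unfolding carryv_def
  proof (intro iffI allI impI)
    fix j assume h: "\<forall>j. 3*j < p mod (3*N) \<longrightarrow> (v @ [x])!(p - p mod (3*N) + 3*j) = b" and j: "3*j < p mod (3*N)"
    show "v!(p - p mod (3*N) + 3*j) = b" using eq[OF j] h[rule_format, OF j] by (simp only:)
  next
    fix j assume h: "\<forall>j. 3*j < p mod (3*N) \<longrightarrow> v!(p - p mod (3*N) + 3*j) = b" and j: "3*j < p mod (3*N)"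
    show "(v @ [x])!(p - p mod (3*N) + 3*j) = b" using eq[OF j] h[rule_format, OF j] by (simp only:)
  qed
qed

lemma ev_snoc: "p < length v \<Longrightarrow> ev N (v @ [x]) p = ev N v p"
proof -
  assume p: "p < length v"
  then have "(v @ [x])!p = v!p" by (simp add: nth_append)
  moreover have "carryv N (v @ [x]) p = carryv N v p" using p by (intro carryv_snoc) simp
  ultimately show ?thesis unfolding ev_def by simp
qed

lemma carryv_L: "carryv N v (length v) = (length v mod (3*N) = 0 \<or> Fv N v)"
proof (cases "length v mod (3*N) = 0")
  case True
  then show ?thesis unfolding carryv_def by simp
next
  case False
  then have "length v \<noteq> 0" by auto
  with False show ?thesis unfolding carryv_def Fv_def Let_def by simp
qed

lemma err_snoc: assumes N: "N \<ge> 1" shows "err N (v @ [x]) = (err N v \<or> imm N (length v) x \<or>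
     (3*N \<le> length v \<and> (length v - 3*N) mod 3 = 0 \<and> ((x = b) \<noteq> ev N v (length v - 3*N))))"
  (is "?l = ?r")
proof (rule iffI)
  assume l: ?l
  have "\<exists>q. q < length (v@[x]) \<and> (imm N q ((v@[x])!q) \<or> (q mod 3 = 0 \<and> q + 3*N < length (v@[x]) \<and> (((v@[x])!(q+3*N) = b) \<noteq> ev N (v@[x]) q)))"
    using l unfolding err_def by blast
  then obtain q where qh: "q < length (v@[x]) \<and> (imm N q ((v@[x])!q) \<or> (q mod 3 = 0 \<and> q + 3*N < length (v@[x]) \<and> (((v@[x])!(q+3*N) = b) \<noteq> ev N (v@[x]) q)))" ..
  have q0: "q < length (v@[x])" using qh by (rule conjunct1)
  have h: "imm N q ((v@[x])!q) \<or> (q mod 3 = 0 \<and> q + 3*N < length (v@[x]) \<and> (((v@[x])!(q+3*N) = b) \<noteq> ev N (v@[x]) q))" using qh by (rule conjunct2)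
  have q: "q < length v + 1" using q0 by simp
  show ?r
  proof (cases "q = length v")
    case True
    have "(v@[x])!q = x" using True by simp
    moreover have "\<not> q + 3*N < length (v@[x])" using True N by simp
    ultimately have "imm N (length v) x" using h True by simp
    then show ?thesis by simp
  next
    case False
    then have ql: "q < length v" using q by auto
    have e1: "(v@[x])!q = v!q" using ql by (simp add: nth_append)
    have e2: "ev N (v@[x]) q = ev N v q" using ql by (rule ev_snoc)
    show ?thesis
    proof (cases "imm N q (v!q)")
      case True
      then have "err N v" unfolding err_def using ql by blast
      then show ?thesis by simp
    next
      case False
      then have h2: "q mod 3 = 0 \<and> q + 3*N < length v + 1 \<and> (((v@[x])!(q+3*N) = b) \<noteq> ev N v q)"
        using h e1 e2 by simp
      show ?thesis
      proof (cases "q + 3*N = length v")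
        case True
        then have "(v@[x])!(q+3*N) = x" by simp
        moreover have "length v - 3*N = q" using True by simp
        ultimately show ?thesis using h2 True by auto
      next
        case False
        then have lt: "q + 3*N < length v" using h2 by simp
        then have "(v@[x])!(q+3*N) = v!(q+3*N)" by (simp add: nth_append)
        then have "err N v" unfolding err_def using ql lt h2 by (intro exI[of _ q]) simp
        then show ?thesis by simp
      qed
    qed
  qed
next
  assume ?r
  then show ?l
  proof (elim disjE)
    assume "err N v"
    then obtain q where qh: "q < length v \<and> (imm N q (v!q) \<or> (q mod 3 = 0 \<and> q + 3*N < length v \<and> ((v!(q+3*N) = b) \<noteq> ev N v q)))"
      unfolding err_def ..
    have ql: "q < length v" using qh by (rule conjunct1)
    have h: "imm N q (v!q) \<or> (q mod 3 = 0 \<and> q + 3*N < length v \<and> ((v!(q+3*N) = b) \<noteq> ev N v q))" using qh by (rule conjunct2)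
    have e1: "(v@[x])!q = v!q" using ql by (simp add: nth_append)
    have e2: "ev N (v@[x]) q = ev N v q" using ql by (rule ev_snoc)
    show ?l
    proof (cases "imm N q (v!q)")
      case True
      then show ?thesis unfolding err_def using ql e1 by (intro exI[of _ q]) simp
    next
      case False
      then have lt: "q mod 3 = 0 \<and> q + 3*N < length v \<and> ((v!(q+3*N) = b) \<noteq> ev N v q)" using h by simp
      then have "(v@[x])!(q+3*N) = v!(q+3*N)" by (simp add: nth_append)
      then show ?thesis unfolding err_def using ql lt e2 by (intro exI[of _ q]) simp
    qed
  next
    assume "imm N (length v) x"
    then show ?l unfolding err_def by (intro exI[of _ "length v"]) simp
  next
    assume h: "3*N \<le> length v \<and> (length v - 3*N) mod 3 = 0 \<and> ((x = b) \<noteq> ev N v (length v - 3*N))"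
    define q where "q = length v - 3*N"
    have ql: "q < length v" using h N unfolding q_def by linarith
    have qe: "q + 3*N = length v" using h by (simp add: q_def)
    have e2: "ev N (v@[x]) q = ev N v q" using ql by (rule ev_snoc)
    have "(v@[x])!(q+3*N) = x" using qe by simp
    then show ?l unfolding err_def using h ql qe e2
      by (intro exI[of _ q]) (simp add: q_def[symmetric])
  qed
qed


lemma S1:
  assumes N: "N \<ge> 1"
  shows "delta_st N (scan N v) x = {scan N (v @ [x])}
     \<union> (if length v mod 3 = 0 then {Wt (3*N - 1) (ev N (v @ [x]) (length v))} else {})
     \<union> (if imm N (length v) x then {Ac} else {})"
proof -
  obtain c where c: "scan N v = Sc (length v mod (3*N)) (Fv N v) (length v < 3*N) c"
    using scan_inv[OF N] by blast
  have rm: "length v mod (3*N) mod 3 = length v mod 3" by (rule mod3_B)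
  have evL: "ev N (v @ [x]) (length v) = ((x = b) \<noteq> (length v mod (3*N) = 0 \<or> Fv N v))"
    unfolding ev_def carryv_snoc[OF le_refl] carryv_L by simp
  have st: "stepS N (scan N v) x = scan N (v @ [x])" by (simp add: scan_snoc)
  have im: "((length v mod (3*N) mod 3 = 1 \<and> x \<noteq> a) \<or> (length v mod (3*N) mod 3 = 2 \<and> x \<noteq> b) \<or>
         (length v mod (3*N) mod 3 = 0 \<and> length v < 3*N \<and> x = b)) = imm N (length v) x"
    unfolding rm imm_def by simp
  have eq: "delta_st N (scan N v) x = {stepS N (scan N v) x}
     \<union> (if length v mod (3*N) mod 3 = 0 then {Wt (3*N - 1) ((x = b) \<noteq> (length v mod (3*N) = 0 \<or> Fv N v))} else {})
     \<union> (if ((length v mod (3*N) mod 3 = 1 \<and> x \<noteq> a) \<or> (length v mod (3*N) mod 3 = 2 \<and> x \<noteq> b) \<or>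
         (length v mod (3*N) mod 3 = 0 \<and> length v < 3*N \<and> x = b)) then {Ac} else {})"
    unfolding c delta_st_def by (simp only: st.case)
  have im2: "((length v mod 3 = 1 \<and> x \<noteq> a) \<or> (length v mod 3 = 2 \<and> x \<noteq> b) \<or>
         (length v mod 3 = 0 \<and> length v < 3*N \<and> x = b)) = imm N (length v) x"
    unfolding imm_def by simp
  show ?thesis unfolding eq st rm evL[symmetric] im2 by (rule refl)
qed

lemma Wset_mem: "s \<in> Wset N v \<longleftrightarrow> (\<exists>p. s = Wt (p + 3*N - length v) (ev N v p) \<and> p < length v \<and> p mod 3 = 0 \<and> length v \<le> p + 3*N)"
  unfolding Wset_def by (rule mem_Collect_eq)

lemma S2:
  assumes N: "N \<ge> 1"
  shows "(\<Union>s\<in>Wset N v. delta_st N s x) =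
     {Wt (p + 3*N - Suc (length v)) (ev N (v @ [x]) p) | p. p < length v \<and> p mod 3 = 0 \<and> Suc (length v) \<le> p + 3*N}
     \<union> (if 3*N \<le> length v \<and> (length v - 3*N) mod 3 = 0 \<and> ((x = b) \<noteq> ev N v (length v - 3*N)) then {Ac} else {})"
  (is "?L = ?A \<union> ?B")
proof (rule set_eqI, rule iffI)
  fix t assume "t \<in> ?L"
  then obtain s where s: "s \<in> Wset N v" and t: "t \<in> delta_st N s x" by (rule UN_E)
  from s obtain p where sp0: "s = Wt (p + 3*N - length v) (ev N v p) \<and> p < length v \<and> p mod 3 = 0 \<and> length v \<le> p + 3*N"
    unfolding Wset_mem ..
  have sp: "s = Wt (p + 3*N - length v) (ev N v p)" and p: "p < length v" "p mod 3 = 0" "length v \<le> p + 3*N"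
    using sp0 by simp_all
  show "t \<in> ?A \<union> ?B"
  proof (cases "p + 3*N = length v")
    case True
    then have t2: "t \<in> delta_st N (Wt 0 (ev N v p)) x" using t sp by simp
    then have "t = Ac \<and> (x = b) \<noteq> ev N v p" by (simp add: delta_st_def split: if_splits)
    moreover have "length v - 3*N = p" "3*N \<le> length v" using True by auto
    ultimately have "t \<in> ?B" using p by simp
    then show ?thesis by (rule UnI2)
  next
    case False
    then have d: "p + 3*N - length v \<noteq> 0" using p by simp
    have "t = Wt (p + 3*N - length v - 1) (ev N v p)" using t sp d by (simp add: delta_st_def)
    then have "t = Wt (p + 3*N - Suc (length v)) (ev N (v @ [x]) p)" using p by (simp add: ev_snoc)
    moreover have "Suc (length v) \<le> p + 3*N" using False p by simp
    ultimately have "t \<in> ?A" unfolding mem_Collect_eq using p by (intro exI[of _ p]) simp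
    then show ?thesis by (rule UnI1)
  qed
next
  fix t assume "t \<in> ?A \<union> ?B"
  then show "t \<in> ?L"
  proof
    assume "t \<in> ?A"
    then obtain p where tp0: "t = Wt (p + 3*N - Suc (length v)) (ev N (v @ [x]) p) \<and> p < length v \<and> p mod 3 = 0 \<and> Suc (length v) \<le> p + 3*N"
      unfolding mem_Collect_eq ..
    have tp: "t = Wt (p + 3*N - Suc (length v)) (ev N (v @ [x]) p)" and
      p: "p < length v" "p mod 3 = 0" "Suc (length v) \<le> p + 3*N" using tp0 by simp_all
    have e: "ev N (v @ [x]) p = ev N v p" using p by (simp add: ev_snoc)
    define s where "s = Wt (p + 3*N - length v) (ev N v p)"
    have "s \<in> Wset N v" unfolding Wset_mem s_def using p by auto
    moreover have "t \<in> delta_st N s x" unfolding s_def delta_st_def tp e using p by simp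
    ultimately show ?thesis by (rule UN_I)
  next
    assume tB: "t \<in> ?B"
    then have h: "3*N \<le> length v" "(length v - 3*N) mod 3 = 0" "(x = b) \<noteq> ev N v (length v - 3*N)" and tA: "t = Ac"
      by (simp_all split: if_splits)
    define p where "p = length v - 3*N"
    define s where "s = Wt 0 (ev N v p)"
    have "s \<in> Wset N v" unfolding Wset_mem s_def p_def
      using h N by (intro exI[of _ "length v - 3*N"]) auto
    moreover have "t \<in> delta_st N s x" unfolding s_def delta_st_def tA using h by (simp add: p_def)
    ultimately show ?thesis by (rule UN_I)
  qed
qed

lemma split_Suc_set: "{f p | p. p < Suc L \<and> P p} = {f p | p. p = L \<and> P p} \<union> {f p | p. p < L \<and> P p}"
  by (auto simp: less_Suc_eq)

lemma S3:
  assumes N: "N \<ge> 1"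
  shows "Wset N (v @ [x]) = (if length v mod 3 = 0 then {Wt (3*N - 1) (ev N (v @ [x]) (length v))} else {})
     \<union> {Wt (p + 3*N - Suc (length v)) (ev N (v @ [x]) p) | p. p < length v \<and> p mod 3 = 0 \<and> Suc (length v) \<le> p + 3*N}"
proof -
  have "Wset N (v @ [x]) = {Wt (p + 3*N - Suc (length v)) (ev N (v @ [x]) p) | p. p = length v \<and> p mod 3 = 0 \<and> Suc (length v) \<le> p + 3*N}
     \<union> {Wt (p + 3*N - Suc (length v)) (ev N (v @ [x]) p) | p. p < length v \<and> p mod 3 = 0 \<and> Suc (length v) \<le> p + 3*N}"
    unfolding Wset_def length_append_singleton
    by (rule split_Suc_set[where f="\<lambda>p. Wt (p + 3*N - Suc (length v)) (ev N (v @ [x]) p)" and L="length v" and P="\<lambda>p. p mod 3 = 0 \<and> Suc (length v) \<le> p + 3*N"])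
  moreover have "{Wt (p + 3*N - Suc (length v)) (ev N (v @ [x]) p) | p. p = length v \<and> p mod 3 = 0 \<and> Suc (length v) \<le> p + 3*N}
     = (if length v mod 3 = 0 then {Wt (3*N - 1) (ev N (v @ [x]) (length v))} else {})"
    using N by auto
  ultimately show ?thesis by (simp only:)
qed

lemma setalg: "({s} \<union> W1 \<union> A1) \<union> (W2 \<union> A2) \<union> A0 = {s} \<union> (W1 \<union> W2) \<union> (A0 \<union> A1 \<union> A2)"
  by blast

lemma ifAc: "(if P then {Ac} else {}) \<union> (if Q then {Ac} else {}) \<union> (if R then {Ac} else {}) = (if P \<or> Q \<or> R then {Ac} else {})"
  by auto

lemma D:
  assumes N: "N \<ge> 1"
  shows "dst N Sc0 v = {scan N v} \<union> Wset N v \<union> (if err N v then {Ac} else {})"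
proof (induction v rule: rev_induct)
  case Nil
  then show ?case by (simp add: scan_def Wset_def err_def)
next
  case (snoc x v)
  have "dst N Sc0 (v @ [x]) = (\<Union>s\<in>dst N Sc0 v. delta_st N s x)" by (rule dst_snoc)
  also have "\<dots> = delta_st N (scan N v) x \<union> (\<Union>s\<in>Wset N v. delta_st N s x) \<union> (if err N v then {Ac} else {})"
  proof -
    have ac: "delta_st N Ac x = {Ac}" by (simp add: delta_st_def)
    show ?thesis unfolding snoc UN_Un by (cases "err N v") (simp_all add: ac Un_ac)
  qed
  also have "\<dots> = {scan N (v @ [x])} \<union> Wset N (v @ [x]) \<union> (if err N (v @ [x]) then {Ac} else {})"
    unfolding S1[OF N] S2[OF N] setalg S3[OF N] err_snoc[OF N] ifAc by (rule refl)
  finally show ?case .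
qed


lemma carry_arith: "(\<forall>j'<j. odd ((K::nat) div 2^j')) \<longleftrightarrow> K mod 2^j = 2^j - 1"
proof (induction j arbitrary: K)
  case 0
  then show ?case by simp
next
  case (Suc j)
  have "(\<forall>j'<Suc j. odd (K div 2^j')) \<longleftrightarrow> odd K \<and> (\<forall>j'<j. odd ((K div 2) div 2^j'))"
    by (auto simp: less_Suc_eq_0_disj div_mult2_eq)
  also have "\<dots> \<longleftrightarrow> odd K \<and> (K div 2) mod 2^j = 2^j - 1" using Suc.IH by simp
  also have "\<dots> \<longleftrightarrow> K mod 2^(Suc j) = 2^(Suc j) - 1"
  proof -
    have m: "K mod 2^(Suc j) = 2 * ((K div 2) mod 2^j) + K mod 2"
      by (simp add: mod_mult2_eq mult.commute)
    have h1: "(1::nat) \<le> 2^j" by simp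
    have p: "(2::nat)^(Suc j) - 1 = 2 * (2^j - 1) + 1" unfolding power_Suc using h1 by linarith
    have g: "(c::nat) < 2 \<Longrightarrow> (c = 1 \<and> X = Y) \<longleftrightarrow> (2*X + c = 2*Y + 1)" for c X Y by presburger
    show ?thesis unfolding m p using g[of "K mod 2" "K div 2 mod 2^j" "2^j - 1"] by (simp add: odd_iff_mod_2_eq_one)
  qed
  finally show ?case .
qed

lemma incr_div: "((K::nat) + 1) div 2^j = K div 2^j + (if K mod 2^j = 2^j - 1 then 1 else 0)"
proof -
  define m where "m = K div 2^j"
  define s where "s = K mod 2^j"
  have K: "K = 2^j * m + s" by (simp add: m_def s_def)
  have s: "s < 2^j" by (simp add: s_def)
  show ?thesis
  proof (cases "s = 2^j - 1")
    case True
    then have "K + 1 = 2^j * (m + 1)" using K by simp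
    then show ?thesis using True by (simp add: m_def s_def[symmetric])
  next
    case False
    then have "s + 1 < 2^j" using s by simp
    have e: "K + 1 = (s + 1) + m * 2^j" using K by simp
    have "(K + 1) div 2^j = m + (s + 1) div 2^j" unfolding e by (rule div_mult_self1) simp
    then have "(K + 1) div 2^j = m" using \<open>s + 1 < 2^j\<close> by simp
    then show ?thesis using False by (simp add: m_def s_def[symmetric])
  qed
qed

lemma incr_bit: "odd (((K::nat) + 1) div 2^j) \<longleftrightarrow> (odd (K div 2^j) \<noteq> (\<forall>j'<j. odd (K div 2^j')))"
  unfolding incr_div carry_arith by auto


definition U :: "nat \<Rightarrow> nat \<Rightarrow> ab" where
  "U N q = (let r = q mod (3*N); k = q div (3*N) in
     if r mod 3 = 0 then (if odd (k div 2^(r div 3)) then b else a)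
     else if r mod 3 = 1 then a else b)"

lemma U_block: "3*j < 3*N \<Longrightarrow> U N (k*(3*N) + 3*j) = (if odd (k div 2^j) then b else a)"
  unfolding U_def Let_def by simp

lemma U_mod1: "q mod 3 = 1 \<Longrightarrow> U N q = a"
  unfolding U_def Let_def by (simp add: mod3_B)

lemma U_mod2: "q mod 3 = 2 \<Longrightarrow> U N q = b"
  unfolding U_def Let_def by (simp add: mod3_B)

definition carryU :: "nat \<Rightarrow> nat \<Rightarrow> bool" where
  "carryU N q = (\<forall>j. 3*j < q mod (3*N) \<longrightarrow> U N (q - q mod (3*N) + 3*j) = b)"

lemma U_rule:
  assumes N: "N \<ge> 1" and q3: "q mod 3 = 0"
  shows "(U N (q + 3*N) = b) \<longleftrightarrow> ((U N q = b) \<noteq> carryU N q)"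
proof -
  define B where "B = 3*N"
  define r where "r = q mod B"
  define k where "k = q div B"
  have B0: "B > 0" using N by (simp add: B_def)
  have qk: "q = k*B + r" by (simp add: k_def r_def)
  have r3: "r mod 3 = 0" using q3 by (simp add: r_def B_def mod3_B)
  then obtain jj where jj: "r = 3*jj" by auto
  have rB: "r < B" using B0 by (simp add: r_def)
  have Uq: "(U N q = b) \<longleftrightarrow> odd (k div 2^jj)"
    using U_block[of jj N k] qk jj rB by (simp add: B_def)
  have e: "q + 3*N = (k+1)*(3*N) + 3*jj" using qk jj by (simp add: B_def algebra_simps)
  have "U N ((k+1)*(3*N) + 3*jj) = (if odd ((k+1) div 2^jj) then b else a)"
    using jj rB by (intro U_block) (simp add: B_def)
  then have UqB: "(U N (q + 3*N) = b) \<longleftrightarrow> odd ((k+1) div 2^jj)"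
    unfolding e by simp
  have "carryU N q \<longleftrightarrow> (\<forall>j. 3*j < r \<longrightarrow> U N (k*B + 3*j) = b)"
    unfolding carryU_def B_def[symmetric] r_def[symmetric] using qk by simp
  also have "\<dots> \<longleftrightarrow> (\<forall>j<jj. odd (k div 2^j))"
  proof -
    have "(3*j < r \<longrightarrow> U N (k*B + 3*j) = b) \<longleftrightarrow> (j < jj \<longrightarrow> odd (k div 2^j))" for j
      using U_block[of j N k] jj rB by (auto simp: B_def)
    then show ?thesis by simp
  qed
  finally show ?thesis unfolding Uq UqB incr_bit by simp
qed

lemma U_period: "N \<ge> 1 \<Longrightarrow> U N (q + 3*N*2^N) = U N q"
proof -
  assume N: "N \<ge> 1"
  define B where "B = 3*N"
  have B0: "B > 0" using N by (simp add: B_def)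
  have m: "(q + B*2^N) mod B = q mod B" by simp
  have d: "(q + B*2^N) div B = q div B + 2^N" using B0 by simp
  have par: "odd ((k + 2^N) div 2^j) \<longleftrightarrow> odd (k div 2^j)" if "j < N" for k j :: nat
  proof -
    have "(2::nat)^N = 2^(N-j) * 2^j" using that by (simp add: power_add[symmetric])
    then have "(k + 2^N) div 2^j = k div 2^j + 2^(N-j)" by simp
    moreover have "even ((2::nat)^(N-j))" using that by simp
    ultimately show ?thesis by simp
  qed
  have "q mod (3*N) < 3*N" using N by simp
  then have "q mod (3*N) div 3 < N" by (intro less_mult_imp_div_less) (simp add: mult.commute)
  then have "q mod B div 3 < N" by (simp add: B_def)
  then show ?thesis unfolding U_def Let_def B_def[symmetric] m d using par by simp
qed

lemma U_noerr:
  assumes N: "N \<ge> 1" and v: "\<forall>q<length v. v!q = U N q"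
  shows "\<not> err N v"
proof
  assume "err N v"
  then obtain q where qh: "q < length v \<and> (imm N q (v!q) \<or> (q mod 3 = 0 \<and> q + 3*N < length v \<and> ((v!(q+3*N) = b) \<noteq> ev N v q)))"
    unfolding err_def ..
  have q: "q < length v" using qh by simp
  have vq: "v!q = U N q" using v q by simp
  have notimm: "\<not> imm N q (v!q)"
  proof -
    have "U N q = a" if "q mod 3 = 0" "q < 3*N"
    proof -
      have "U N (0*(3*N) + 3*(q div 3)) = a" using U_block[of "q div 3" N 0] that by simp
      moreover have "0*(3*N) + 3*(q div 3) = q" using that by presburger
      ultimately show ?thesis by simp
    qed
    then show ?thesis unfolding imm_def vq using U_mod1[of q N] U_mod2[of q N] by auto
  qed
  then have h: "q mod 3 = 0 \<and> q + 3*N < length v \<and> ((v!(q+3*N) = b) \<noteq> ev N v q)" using qh by simp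
  have c: "carryv N v q = carryU N q"
  proof -
    have "v!(q - q mod (3*N) + 3*j) = U N (q - q mod (3*N) + 3*j)" if "3*j < q mod (3*N)" for j
    proof -
      have "q mod (3*N) \<le> q" by simp
      then have "q - q mod (3*N) + 3*j < length v" using that q by linarith
      then show ?thesis using v by simp
    qed
    then show ?thesis unfolding carryv_def carryU_def by auto
  qed
  have "(U N (q + 3*N) = b) \<noteq> ((U N q = b) \<noteq> carryU N q)"
    using h v vq c unfolding ev_def by auto
  then show False using U_rule[OF N] h by simp
qed

lemma noerr_U:
  assumes N: "N \<ge> 1" and ne: "\<not> err N v"
  shows "\<forall>q<length v. v!q = U N q"
proof (intro allI impI)
  fix q assume "q < length v"
  then show "v!q = U N q"
  proof (induction q rule: less_induct)
    case (less q)
    have noimm: "\<not> imm N q (v!q)" using ne less.prems unfolding err_def by blast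
    show ?case
    proof (cases "q mod 3 = 0")
      case False
      then have "q mod 3 = 1 \<or> q mod 3 = 2" by auto
      then show ?thesis using noimm U_mod1[of q N] U_mod2[of q N] unfolding imm_def
        by (cases "v!q") auto
    next
      case True
      show ?thesis
      proof (cases "q < 3*N")
        case True2: True
        have "U N (0*(3*N) + 3*(q div 3)) = a" using U_block[of "q div 3" N 0] True2 by simp
        moreover have "0*(3*N) + 3*(q div 3) = q" using True by presburger
        ultimately have "U N q = a" by simp
        moreover have "v!q = a" using noimm True True2 unfolding imm_def by (cases "v!q") auto
        ultimately show ?thesis by simp
      next
        case False
        define p where "p = q - 3*N"
        have pq: "p + 3*N = q" using False by (simp add: p_def)
        have p3: "p mod 3 = 0" using True pq by presburger
        have pl: "p < q" using N pq by simp
        have pv: "p < length v" using pl less.prems by simp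
        have "err N v" if "(v!(p+3*N) = b) \<noteq> ev N v p"
          unfolding err_def using that pv p3 pq less.prems by (intro exI[of _ p]) simp
        then have nd: "\<not> ((v!(p+3*N) = b) \<noteq> ev N v p)" using ne by blast
        have vp: "v!p = U N p" using less.IH pl less.prems by simp
        have c: "carryv N v p = carryU N p"
        proof -
          have "v!(p - p mod (3*N) + 3*j) = U N (p - p mod (3*N) + 3*j)" if "3*j < p mod (3*N)" for j
          proof -
            have "p mod (3*N) \<le> p" by simp
            then have "p - p mod (3*N) + 3*j < p" using that by linarith
            then show ?thesis using less.IH less.prems pl by simp
          qed
          then show ?thesis unfolding carryv_def carryU_def by auto
        qed
        have "(v!q = b) \<longleftrightarrow> (U N q = b)"
          using nd U_rule[OF N p3] vp c pq unfolding ev_def by simp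
        then show ?thesis by (cases "v!q"; cases "U N q") auto
      qed
    qed
  qed
qed


fun cntof :: "st \<Rightarrow> nat" where
  "cntof (Sc r f z c) = c"
| "cntof (Wt d e) = 0"
| "cntof Ac = 0"

lemma acc:
  assumes N: "N \<ge> 1"
  shows "v \<in> lang (Anfa N) \<longleftrightarrow> err N v \<or> cntof (scan N v) \<noteq> 1"
proof -
  obtain c where c: "scan N v = Sc (length v mod (3*N)) (Fv N v) (length v < 3*N) c" "c < 3"
    using scan_inv[OF N] by blast
  have lt: "length v mod (3*N) < 3*N" using N by simp
  have sF: "scan N v \<in> FS N \<longleftrightarrow> c \<noteq> 1" using c lt by (simp add: FS_def okst_def)
  have WF: "Wset N v \<inter> FS N = {}" by (auto simp: Wset_mem FS_def okst_def)
  have AF: "Ac \<in> FS N" by (simp add: FS_def okst_def)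
  have "dst N Sc0 v \<inter> FS N \<noteq> {} \<longleftrightarrow> scan N v \<in> FS N \<or> err N v"
    unfolding D[OF N] using WF AF by auto
  then show ?thesis unfolding lang_Anfa using sF c by auto
qed

lemma div_pred: "(P::nat) > 0 \<Longrightarrow> L > 0 \<Longrightarrow> L div P = (L - 1) div P + (if P dvd L then 1 else 0)"
proof -
  assume P: "P > 0" and L: "L > 0"
  then obtain L' where L': "L = Suc L'" by (cases L) auto
  have "Suc L' div P = (if Suc L' mod P = 0 then Suc (L' div P) else L' div P)" by (rule div_Suc)
  then show ?thesis unfolding L' by (auto simp: dvd_eq_mod_eq_0)
qed

lemma pred_mod: "(m::nat) > 0 \<Longrightarrow> k \<ge> 1 \<Longrightarrow> (k - 1) mod m = m - 1 \<longleftrightarrow> m dvd k"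
proof -
  assume m: "m > 0" and k: "k \<ge> 1"
  then obtain k' where k': "k = Suc k'" by (cases k) auto
  have "Suc k' mod m = (if Suc (k' mod m) = m then 0 else Suc (k' mod m))" by (rule mod_Suc)
  moreover have "k' mod m < m" using m by simp
  ultimately show ?thesis unfolding k' using m by (auto simp: dvd_eq_mod_eq_0)
qed

lemma cnt_U:
  assumes N: "N \<ge> 1"
  shows "(\<forall>q<length v. v!q = U N q) \<Longrightarrow> cntof (scan N v) = min 2 ((length v - 1) div (3*N*2^N))"
proof (induction v rule: rev_induct)
  case Nil
  then show ?case by (simp add: scan_def Sc0_def)
next
  case (snoc x v)
  define L where "L = length v"
  define B where "B = 3*N"
  define P where "P = 3*N*2^N"
  have B0: "B > 0" using N by (simp add: B_def)
  have P0: "P > 0" using N by (simp add: P_def)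
  have PB: "P = B * 2^N" by (simp add: P_def B_def)
  have vU: "\<forall>q<length v. v!q = U N q"
  proof (intro allI impI)
    fix q assume q: "q < length v"
    then have "(v @ [x])!q = U N q" using snoc.prems by simp
    then show "v!q = U N q" using q by (simp add: nth_append)
  qed
  have IH: "cntof (scan N v) = min 2 ((L - 1) div P)" using snoc.IH[OF vU] by (simp add: L_def P_def)
  obtain c where c: "scan N v = Sc (L mod B) (Fv N v) (L < B) c"
    using scan_inv[OF N] by (auto simp: L_def B_def)
  have cIH: "c = min 2 ((L - 1) div P)" using IH c by simp
  have key: "(L mod B = 0 \<and> Fv N v) \<longleftrightarrow> (L > 0 \<and> P dvd L)"
  proof (cases "L > 0 \<and> L mod B = 0")
    case True
    then obtain k where k: "L = k * B" by (auto elim!: dvdE simp: dvd_eq_mod_eq_0 mult.commute)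
    have k1: "k \<ge> 1" using True k by (cases k) auto
    have "Fv N v \<longleftrightarrow> (\<forall>j. 3*j < B \<longrightarrow> v!(L - B + 3*j) = b)"
      using True by (simp add: Fv_def L_def[symmetric] B_def[symmetric] Let_def)
    also have "\<dots> \<longleftrightarrow> (\<forall>j<N. odd ((k - 1) div 2^j))"
    proof -
      have "(3*j < B \<longrightarrow> v!(L - B + 3*j) = b) \<longleftrightarrow> (j < N \<longrightarrow> odd ((k - 1) div 2^j))" for j
      proof (cases "j < N")
        case True
        have e: "L - B + 3*j = (k-1)*(3*N) + 3*j" using k k1 by (simp add: B_def algebra_simps diff_mult_distrib)
        have lt: "L - B + 3*j < length v" using True k k1 by (simp add: L_def[symmetric] B_def) (simp add: e B_def algebra_simps; cases k; simp add: algebra_simps)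
        have "v!(L - B + 3*j) = U N ((k-1)*(3*N) + 3*j)" using vU lt e by simp
        also have "\<dots> = (if odd ((k - 1) div 2^j) then b else a)" using True by (intro U_block) simp
        finally show ?thesis using True by (simp add: B_def)
      next
        case False
        then show ?thesis by (simp add: B_def)
      qed
      then show ?thesis by simp
    qed
    also have "\<dots> \<longleftrightarrow> (k - 1) mod 2^N = 2^N - 1" by (rule carry_arith)
    also have "\<dots> \<longleftrightarrow> 2^N dvd k" using k1 by (intro pred_mod) simp_all
    also have "\<dots> \<longleftrightarrow> P dvd L" unfolding k PB using B0 by simp
    finally show ?thesis using True by simp
  next
    case False
    then show ?thesis
    proof (cases "L > 0")
      case True
      with False have "L mod B \<noteq> 0" by simp
      moreover have "P dvd L \<Longrightarrow> L mod B = 0" unfolding PB by (auto simp: dvd_eq_mod_eq_0[symmetric] intro: dvd_mult_left)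
      ultimately show ?thesis by auto
    next
      case False
      then show ?thesis by (simp add: Fv_def L_def)
    qed
  qed
  have "cntof (scan N (v @ [x])) = (if L mod B = 0 \<and> Fv N v then min 2 (Suc c) else c)"
    unfolding scan_snoc c by (simp add: stepS_def B_def)
  also have "\<dots> = min 2 (L div P)"
  proof (cases "L > 0")
    case True
    show ?thesis unfolding key cIH div_pred[OF P0 True] using True by auto
  next
    case False
    then show ?thesis using key cIH by simp
  qed
  finally show ?case by (simp add: L_def P_def)
qed


definition per :: "nat \<Rightarrow> nat" where "per N = 3*N*2^N"

definition uw :: "nat \<Rightarrow> ab list" where "uw N = map (U N) [0..<per N]"
definition ww :: "nat \<Rightarrow> ab list" where "ww N = map (U N) [0..<2 * per N]"

lemma per_pos: "N \<ge> 1 \<Longrightarrow> per N > 0"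
  by (simp add: per_def)

lemma u_in: assumes N: "N \<ge> 1" shows "uw N \<in> lang (Anfa N)"
proof -
  have v: "\<forall>q<length (uw N). uw N ! q = U N q" by (simp add: uw_def)
  have "cntof (scan N (uw N)) = min 2 ((per N - 1) div per N)"
    using cnt_U[OF N v] by (simp add: uw_def per_def)
  also have "\<dots> = 0" using per_pos[OF N] by simp
  finally show ?thesis unfolding acc[OF N] by simp
qed

lemma w_out: assumes N: "N \<ge> 1" shows "ww N \<notin> lang (Anfa N)"
proof -
  have v: "\<forall>q<length (ww N). ww N ! q = U N q" by (simp add: ww_def)
  have "cntof (scan N (ww N)) = min 2 ((2 * per N - 1) div per N)"
    using cnt_U[OF N v] by (simp add: ww_def per_def)
  also have "\<dots> = 1"
  proof -
    have P: "per N > 0" using per_pos[OF N] .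
    have "(2 * per N - 1) div per N = 1"
      using P by (intro div_nat_eqI) auto
    then show ?thesis by simp
  qed
  finally show ?thesis unfolding acc[OF N] using U_noerr[OF N v] by simp
qed

lemma cofin: assumes N: "N \<ge> 1" shows "finite (- lang (Anfa N))"
proof -
  have "- lang (Anfa N) \<subseteq> {xs. set xs \<subseteq> UNIV \<and> length xs \<le> 2 * per N}"
  proof
    fix v assume "v \<in> - lang (Anfa N)"
    then have "v \<notin> lang (Anfa N)" by simp
    then have "\<not> (err N v \<or> cntof (scan N v) \<noteq> 1)" using acc[OF N, of v] by simp
    then have h: "\<not> err N v" "cntof (scan N v) = 1" by auto
    have "min 2 ((length v - 1) div per N) = 1"
      using cnt_U[OF N noerr_U[OF N h(1)]] h(2) by (simp add: per_def)
    then have "(length v - 1) div per N = 1" by linarith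
    then have "length v - 1 < 2 * per N"
      using per_pos[OF N] by (metis div_less_iff_less_mult mult.commute one_add_one less_add_one Suc_1 mult_2_right add_lessD1 less_mult_imp_div_less nat_neq_iff div_greater_zero_iff zero_less_one le_less_trans lessI)
    then show "v \<in> {xs. set xs \<subseteq> UNIV \<and> length xs \<le> 2 * per N}" by simp
  qed
  moreover have "finite {xs. set xs \<subseteq> (UNIV :: ab set) \<and> length xs \<le> 2 * per N}"
    by (rule finite_lists_length_le) (simp add: ab_UNIV)
  ultimately show ?thesis by (rule finite_subset)
qed


lemma dstar_append: "delta_star A q (xs @ ys) = (\<Union>p\<in>delta_star A q xs. delta_star A p ys)"
  by (induction xs arbitrary: q) auto

lemma run_exists:
  "q' \<in> delta_star A p v \<Longrightarrow> \<exists>\<rho>. \<rho> 0 = p \<and> \<rho> (length v) = q' \<and> (\<forall>i<length v. \<rho> (Suc i) \<in> delta A (\<rho> i) (v!i))"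
proof (induction v arbitrary: p)
  case Nil
  then show ?case by (intro exI[of _ "\<lambda>_. p"]) simp
next
  case (Cons x v)
  then obtain p' where p': "p' \<in> delta A p x" "q' \<in> delta_star A p' v" by auto
  from Cons.IH[OF p'(2)] obtain \<rho> where r: "\<rho> 0 = p'" "\<rho> (length v) = q'"
    "\<forall>i<length v. \<rho> (Suc i) \<in> delta A (\<rho> i) (v!i)" by blast
  define \<sigma> where "\<sigma> = (\<lambda>i. if i = 0 then p else \<rho> (i - 1))"
  have "\<forall>i<length (x # v). \<sigma> (Suc i) \<in> delta A (\<sigma> i) ((x # v)!i)"
  proof (intro allI impI)
    fix i assume i: "i < length (x # v)"
    show "\<sigma> (Suc i) \<in> delta A (\<sigma> i) ((x # v)!i)"
    proof (cases i)
      case 0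
      then show ?thesis using p' r by (simp add: \<sigma>_def)
    next
      case (Suc i')
      then show ?thesis using r i by (simp add: \<sigma>_def)
    qed
  qed
  then show ?case using r by (intro exI[of _ \<sigma>]) (simp add: \<sigma>_def)
qed

lemma run_slice:
  assumes r: "\<forall>i<length v. \<rho> (Suc i) \<in> delta A (\<rho> i) (v!i)"
  shows "i \<le> j \<Longrightarrow> j \<le> length v \<Longrightarrow> \<rho> j \<in> delta_star A (\<rho> i) (drop i (take j v))"
proof (induction j)
  case 0
  then show ?case by simp
next
  case (Suc j)
  show ?case
  proof (cases "i = Suc j")
    case True
    then show ?thesis by simp
  next
    case False
    then have ij: "i \<le> j" using Suc.prems by simp
    have IH: "\<rho> j \<in> delta_star A (\<rho> i) (drop i (take j v))" using Suc.IH ij Suc.prems by simp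
    have e: "drop i (take (Suc j) v) = drop i (take j v) @ [v!j]"
      using Suc.prems ij by (simp add: take_Suc_conv_app_nth)
    have "\<rho> (Suc j) \<in> delta A (\<rho> j) (v!j)" using r Suc.prems by simp
    then show ?thesis unfolding e dstar_append using IH by auto
  qed
qed

lemma run_states:
  assumes wf: "wf_nfa A" and r: "\<forall>i<length v. \<rho> (Suc i) \<in> delta A (\<rho> i) (v!i)" and r0: "\<rho> 0 \<in> states A"
  shows "i \<le> length v \<Longrightarrow> \<rho> i \<in> states A"
proof (induction i)
  case 0
  then show ?case using r0 by simp
next
  case (Suc i)
  then have "\<rho> i \<in> states A" by simp
  moreover have "\<rho> (Suc i) \<in> delta A (\<rho> i) (v!i)" using r Suc.prems by simp
  ultimately show ?case using wf unfolding wf_nfa_def by blast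
qed

lemma loops_all:
  assumes "q \<in> delta A q a" "q \<in> delta A q b"
  shows "q \<in> delta_star A q Z"
proof (induction Z)
  case Nil
  then show ?case by simp
next
  case (Cons x Z)
  have "q \<in> delta A q x" using assms by (cases x) auto
  then show ?case using Cons by auto
qed

lemma ponfa_pump:
  assumes P: "is_poNFA P" and u: "u \<in> lang P"
    and both: "\<And>k l. k + 3 \<le> l \<Longrightarrow> l \<le> length u \<Longrightarrow>
        (\<exists>j. k \<le> j \<and> j < l \<and> u!j = a) \<and> (\<exists>j. k \<le> j \<and> j < l \<and> u!j = b)"
    and len: "3 * card (states P) < length u + 1"
  shows "\<exists>k l. k + 3 \<le> l \<and> l \<le> length u \<and> (\<forall>Z. take k u @ Z @ drop l u \<in> lang P)"
proof -
  have wf: "wf_nfa P" using P unfolding is_poNFA_def by simp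
  have anti: "\<And>p q. p \<in> states P \<Longrightarrow> q \<in> states P \<Longrightarrow> reach P p q \<Longrightarrow> reach P q p \<Longrightarrow> p = q"
    using P unfolding is_poNFA_def by blast
  from u obtain f where f: "f \<in> final P" "f \<in> delta_star P (init P) u" unfolding lang_def by blast
  from run_exists[OF f(2)] obtain \<rho> where r: "\<rho> 0 = init P" "\<rho> (length u) = f"
    "\<forall>i<length u. \<rho> (Suc i) \<in> delta P (\<rho> i) (u!i)" by blast
  have st: "\<And>i. i \<le> length u \<Longrightarrow> \<rho> i \<in> states P"
    using run_states[OF wf r(3)] r(1) wf unfolding wf_nfa_def by auto
  have "\<exists>k l. k < l \<and> l \<le> length u \<and> \<rho> k = \<rho> l \<and> k + 3 \<le> l"
  proof (rule ccontr)
    assume no: "\<not> ?thesis"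
    have inj: "inj_on (\<lambda>i. (\<rho> i, i mod 3)) {0..length u}"
    proof (rule inj_onI)
      fix i j assume i: "i \<in> {0..length u}" and j: "j \<in> {0..length u}" and e: "(\<rho> i, i mod 3) = (\<rho> j, j mod 3)"
      show "i = j"
      proof (rule ccontr)
        assume "i \<noteq> j"
        then consider "i < j" | "j < i" by linarith
        then show False
        proof cases
          case 1
          have "i + 3 \<le> j" using 1 e by auto presburger
          then show False using no 1 j e by (metis atLeastAtMost_iff prod.inject)
        next
          case 2
          have "j + 3 \<le> i" using 2 e by auto presburger
          moreover have "\<rho> j = \<rho> i" using e by simp
          moreover have "i \<le> length u" using i by simp
          ultimately have "j < i \<and> i \<le> length u \<and> \<rho> j = \<rho> i \<and> j + 3 \<le> i" using 2 by simp
          then show False using no by blast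
        qed
      qed
    qed
    have "(\<lambda>i. (\<rho> i, i mod 3)) ` {0..length u} \<subseteq> states P \<times> {..<3}"
      using st by auto
    moreover have "finite (states P \<times> {..<(3::nat)})" using wf unfolding wf_nfa_def by simp
    ultimately have "card {0..length u} \<le> card (states P \<times> {..<(3::nat)})"
      using inj by (metis card_image card_mono)
    then have "length u + 1 \<le> 3 * card (states P)" by (simp add: card_cartesian_product)
    then show False using len by simp
  qed
  then obtain k l where kl: "k < l" "l \<le> length u" "\<rho> k = \<rho> l" "k + 3 \<le> l" by blast
  define q where "q = \<rho> k"
  have const: "\<rho> j = q" if "k \<le> j" "j \<le> l" for j
  proof -
    have "\<rho> j \<in> delta_star P (\<rho> k) (drop k (take j u))"
      by (rule run_slice[OF r(3)]) (use that kl in auto)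
    then have r1: "reach P q (\<rho> j)" unfolding reach_def q_def by blast
    have "\<rho> l \<in> delta_star P (\<rho> j) (drop j (take l u))"
      by (rule run_slice[OF r(3)]) (use that kl in auto)
    then have r2: "reach P (\<rho> j) q" unfolding reach_def q_def kl(3) by blast
    have "q \<in> states P" "\<rho> j \<in> states P" using st kl that by (auto simp: q_def)
    then show ?thesis using anti r1 r2 by blast
  qed
  have loop: "q \<in> delta P q (u!j)" if "k \<le> j" "j < l" for j
  proof -
    have "\<rho> (Suc j) \<in> delta P (\<rho> j) (u!j)" using r(3) that kl by simp
    then show ?thesis using const that by simp
  qed
  obtain ja jb where "k \<le> ja" "ja < l" "u!ja = a" "k \<le> jb" "jb < l" "u!jb = b"
    using both[OF kl(4) kl(2)] by blast
  then have la: "q \<in> delta P q a" and lb: "q \<in> delta P q b" using loop by force+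
  have pre: "q \<in> delta_star P (init P) (take k u)"
    using run_slice[OF r(3), of 0 k] kl r(1) by (simp add: q_def)
  have suf: "f \<in> delta_star P q (drop l u)"
    using run_slice[OF r(3), of l "length u"] kl r(2) const[of l] by simp
  have "take k u @ Z @ drop l u \<in> lang P" for Z
  proof -
    have "q \<in> delta_star P q Z" by (rule loops_all[OF la lb])
    then have "f \<in> delta_star P (init P) (take k u @ Z @ drop l u)"
      unfolding dstar_append using pre suf by blast
    then show ?thesis unfolding lang_def using f(1) by blast
  qed
  then show ?thesis using kl by blast
qed


lemma ex_mod3:
  assumes r: "(r::nat) < 3"
  shows "\<exists>j. k \<le> j \<and> j \<le> k + 2 \<and> j mod 3 = r"
proof -
  define q where "q = k div 3"
  have kq: "3 * q \<le> k" "k < 3 * q + 3" unfolding q_def by linarith+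
  show ?thesis
  proof (cases "k \<le> 3 * q + r")
    case True
    have "(3 * q + r) mod 3 = r" using r by simp
    then show ?thesis using True kq r by (intro exI[of _ "3 * q + r"]) simp
  next
    case False
    have "(3 * q + r + 3) mod 3 = r" using r by simp
    then show ?thesis using False kq r by (intro exI[of _ "3 * q + r + 3"]) simp
  qed
qed

lemma both_letters:
  assumes N: "N \<ge> 1" and kl: "k + 3 \<le> l" "l \<le> length (uw N)"
  shows "(\<exists>j. k \<le> j \<and> j < l \<and> uw N ! j = a) \<and> (\<exists>j. k \<le> j \<and> j < l \<and> uw N ! j = b)"
proof
  obtain ja where ja: "k \<le> ja" "ja \<le> k + 2" "ja mod 3 = 1" using ex_mod3[of 1 k] by auto
  have "ja < l" "ja < per N" using kl ja by (simp_all add: uw_def)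
  then show "\<exists>j. k \<le> j \<and> j < l \<and> uw N ! j = a"
    using ja by (intro exI[of _ ja]) (simp add: uw_def U_mod1)
next
  obtain jb where jb: "k \<le> jb" "jb \<le> k + 2" "jb mod 3 = 2" using ex_mod3[of 2 k] by auto
  have "jb < l" "jb < per N" using kl jb by (simp_all add: uw_def)
  then show "\<exists>j. k \<le> j \<and> j < l \<and> uw N ! j = b"
    using jb by (intro exI[of _ jb]) (simp add: uw_def U_mod2)
qed

lemma seq_eq:
  assumes N: "N \<ge> 1" and kl: "k \<le> l" "l \<le> per N"
  shows "take k (uw N) @ map (U N) [k..<l + per N] @ drop l (uw N) = ww N"
proof -
  have t: "take k (uw N) = map (U N) [0..<k]" using kl by (simp add: uw_def take_map)
  have d: "drop l (uw N) = map (U N) [l..<per N]" using kl by (simp add: uw_def drop_map)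
  have sh: "map (U N) [l..<per N] = map (U N) [l + per N..<2 * per N]"
  proof (rule nth_equalityI)
    show "length (map (U N) [l..<per N]) = length (map (U N) [l + per N..<2 * per N])" by simp
  next
    fix i assume "i < length (map (U N) [l..<per N])"
    then have i: "l + i < per N" by simp
    have "U N (l + per N + i) = U N ((l + i) + 3*N*2^N)" by (simp add: per_def algebra_simps)
    also have "\<dots> = U N (l + i)" by (rule U_period[OF N])
    finally show "map (U N) [l..<per N] ! i = map (U N) [l + per N..<2 * per N] ! i"
      using i by simp
  qed
  have "[0..<2 * per N] = [0..<k] @ [k..<l + per N] @ [l + per N..<2 * per N]"
  proof -
    have e1: "2 * per N = (l + per N) + (per N - l)" using kl by simp
    have e2: "l + per N = k + (l + per N - k)" using kl by simp
    have a1: "[0..<(l + per N) + (per N - l)] = [0..<l + per N] @ [l + per N..<(l + per N) + (per N - l)]"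
      by (rule upt_add_eq_append) simp
    then have "[0..<2 * per N] = [0..<l + per N] @ [l + per N..<2 * per N]"
      by (simp only: e1[symmetric])
    moreover have a2: "[0..<k + (l + per N - k)] = [0..<k] @ [k..<k + (l + per N - k)]"
      by (rule upt_add_eq_append) simp
    then have "[0..<l + per N] = [0..<k] @ [k..<l + per N]"
      by (simp only: e2[symmetric])
    ultimately show ?thesis by simp
  qed
  then show ?thesis unfolding t d sh ww_def by simp
qed

theorem theorem9:
  shows "\<exists>c::real. \<forall>n::nat. n \<ge> 1 \<longrightarrow>
    (\<exists>L :: ab list set. DD0 L \<and>
       (\<exists>A. wf_nfa A \<and> lang A = L \<and> real (size_nfa A) \<le> c * (real n)^2) \<and>
       (\<forall>P. is_poNFA P \<and> lang P = L \<longrightarrow> size_nfa P > 2^(n - 1)))"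
proof (intro exI[of _ 43] allI impI)
  fix n :: nat assume n: "n \<ge> 1"
  show "\<exists>L :: ab list set. DD0 L \<and>
       (\<exists>A. wf_nfa A \<and> lang A = L \<and> real (size_nfa A) \<le> 43 * (real n)^2) \<and>
       (\<forall>P. is_poNFA P \<and> lang P = L \<longrightarrow> size_nfa P > 2^(n - 1))"
  proof (intro exI[of _ "lang (Anfa n)"] conjI)
    show "DD0 (lang (Anfa n))" unfolding DD0_def using cofin[OF n] by simp
  next
    have "real (size_nfa (Anfa n)) \<le> 42 * real n + 1" using size_Anfa[of n] by linarith
    also have "\<dots> \<le> 43 * (real n)^2"
    proof -
      have "real n \<ge> 1" using n by simp
      then have "real n \<le> (real n)^2" by (simp add: power2_eq_square)
      moreover have "1 \<le> (real n)^2" using \<open>real n \<ge> 1\<close> by (rule one_le_power)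
      ultimately show ?thesis by linarith
    qed
    finally show "\<exists>A. wf_nfa A \<and> lang A = lang (Anfa n) \<and> real (size_nfa A) \<le> 43 * (real n)^2"
      using wf_Anfa[OF n] by blast
  next
    show "\<forall>P. is_poNFA P \<and> lang P = lang (Anfa n) \<longrightarrow> size_nfa P > 2^(n - 1)"
    proof (intro allI impI)
      fix P assume h: "is_poNFA P \<and> lang P = lang (Anfa n)"
      show "size_nfa P > 2^(n - 1)"
      proof (rule ccontr)
        assume "\<not> size_nfa P > 2^(n - 1)"
        then have cs: "card (states P) \<le> 2^(n-1)" by (simp add: size_nfa_def)
        have p2: "(2::nat)^n = 2 * 2^(n-1)" using n by (cases n) auto
        have "3 * card (states P) \<le> 3 * 2^(n-1)" using cs by simp
        also have "\<dots> \<le> 3 * 2^n" unfolding p2 by simp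
        also have "\<dots> \<le> 3 * n * 2^n" using n by simp
        also have "\<dots> < length (uw n) + 1" by (simp add: uw_def per_def)
        finally have "3 * card (states P) < length (uw n) + 1" .
        moreover have "uw n \<in> lang P" using h u_in[OF n] by simp
        ultimately obtain k l where kl: "k + 3 \<le> l" "l \<le> length (uw n)" "\<forall>Z. take k (uw n) @ Z @ drop l (uw n) \<in> lang P"
          using ponfa_pump[of P "uw n"] h both_letters[OF n] by blast
        have lu: "length (uw n) = per n" by (simp add: uw_def)
        have "take k (uw n) @ map (U n) [k..<l + per n] @ drop l (uw n) \<in> lang P" using kl(3) by blast
        moreover have "take k (uw n) @ map (U n) [k..<l + per n] @ drop l (uw n) = ww n"
          using kl lu by (intro seq_eq[OF n]) auto
        ultimately have "ww n \<in> lang P" by simp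
        then show False using h w_out[OF n] by simp
      qed
    qed
  qed
qed


end
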